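(* Let $a,b,c>0$ and let $d,e$ be real numbers, not in $\{0,-1,-2,\dots\}$, such that $de\ge 2abc$ and $$d+e\ \ge\ \max\Big\{a+b+c,\ \tfrac12\big(ab+bc+ac+2(a+b+c)-1-2abc\big),\ 2(ab+bc+ac)-3abc\Big\}.$$ Then $f(z)=z\,{}_3F_2(a,b,c;d,e;z)$ is close-to-convex in $\mathbb{D}$ with respect to $-\log(1-z)$.
   Context: $\mathbb{D}=\{z\in\mathbb{C}:|z|<1\}$. For $x\in\mathbb{C}$, $(x)_0=1$ and $(x)_n=x(x+1)\cdots(x+n-1)$ for $n\ge1$. The Clausen hypergeometric function is ${}_3F_2(a,b,c;d,e;z)=\sum_{n=0}^\infty \frac{(a)_n(b)_n(c)_n}{(d)_n(e)_n(1)_n}z^n$ for $|z|<1$ (with $d,e\notin\{0,-1,-2,\dots\}$). A normalized analytic function $f$ on $\mathbb{D}$ ($f(0)=0$, $f'(0)=1$) is close-to-convex with respect to a convex univalent function $g$ on $\mathbb{D}$ if $f$ is univalent on $\mathbb{D}$ and $\operatorname{Re}\big(f'(z)/g'(z)\big)>0$ for all $z\in\mathbb{D}$. Here $g(z)=-\log(1-z)$, which is convex univalent on $\mathbb{D}$, with $g'(z)=1/(1-z)$. *)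

theory Defs
  imports "HOL-Analysis.Analysis"
begin

definition hyp3F2 :: "complex \<Rightarrow> complex \<Rightarrow> complex \<Rightarrow> complex \<Rightarrow> complex \<Rightarrow> complex \<Rightarrow> complex" where
  "hyp3F2 a b c d e z =
     (\<Sum>n. (pochhammer a n * pochhammer b n * pochhammer c n) /
           (pochhammer d n * pochhammer e n * pochhammer 1 n) * z ^ n)"

definition close_to_convex_wrt :: "(complex \<Rightarrow> complex) \<Rightarrow> (complex \<Rightarrow> complex) \<Rightarrow> bool" where
  "close_to_convex_wrt f g \<longleftrightarrow>
     f holomorphic_on ball 0 1 \<and> f 0 = 0 \<and> deriv f 0 = 1 \<and>
     inj_on f (ball 0 1) \<and>
     (\<forall>z\<in>ball 0 1. Re (deriv f z / deriv g z) > 0)"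

end

theory Submission
  imports Defs
begin


lemma lncos_convex: "convex_on {-pi/2<..<pi/2} (\<lambda>y. - ln (cos y))"
proof (rule convex_on_realI[where f'=tan])
  show "connected {-pi/2<..<pi/2::real}" by simp
next
  fix x :: real assume x: "x \<in> {-pi/2<..<pi/2}"
  then have c: "cos x > 0" by (auto intro: cos_gt_zero_pi)
  then have c': "cos x \<noteq> 0" by simp
  show "((\<lambda>y. - ln (cos y)) has_real_derivative tan x) (at x)"
    using c c' by (auto intro!: derivative_eq_intros simp: tan_def field_simps)
next
  fix x y :: real assume "x \<in> {-pi/2<..<pi/2}" "y \<in> {-pi/2<..<pi/2}" "x \<le> y"
  then show "tan x \<le> tan y"
    by (cases "x = y") (auto intro!: less_imp_le tan_monotone)
qed

lemma exp_ball: "cmod (exp L - 1) < 1 \<longleftrightarrow> exp (Re L) < 2 * cos (Im L)"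
proof -
  define x where "x = exp (Re L)"
  define c where "c = cos (Im L)"
  define s where "s = sin (Im L)"
  have sc: "s^2 + c^2 = 1" unfolding s_def c_def by simp
  have "(cmod (exp L - 1))^2 = (x * c - 1)^2 + (x * s)^2"
    by (simp add: cmod_power2 Re_exp Im_exp x_def c_def s_def)
  also have "\<dots> = x^2 * (s^2 + c^2) - 2 * x * c + 1"
    by (simp add: power2_eq_square algebra_simps)
  also have "\<dots> = x^2 - 2 * x * c + 1" using sc by simp
  finally have e: "(cmod (exp L - 1))^2 = x^2 - 2 * x * c + 1" .
  have x0: "x > 0" unfolding x_def by simp
  have "cmod (exp L - 1) < 1 \<longleftrightarrow> (cmod (exp L - 1))^2 < 1"
    by (simp add: power_less_one_iff abs_square_less_1)
  also have "\<dots> \<longleftrightarrow> x * x < 2 * x * c"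
    unfolding e by (simp add: power2_eq_square)
  also have "\<dots> \<longleftrightarrow> x < 2 * c"
    using x0 by (simp add: mult.commute mult.left_commute)
  finally show ?thesis unfolding x_def c_def .
qed



lemma poly_ineq:
  fixes a b c d e x :: real
  assumes "x \<ge> 0" "a > 0" "b > 0" "c > 0"
    and "d * e \<ge> 2 * a * b * c"
    and "d + e \<ge> a + b + c"
    and "d + e \<ge> (a*b + b*c + a*c + 2*(a + b + c) - 1 - 2*a*b*c) / 2"
    and "d + e \<ge> 2*(a*b + b*c + a*c) - 3*a*b*c"
  shows "(x+2)*(a+x)*(b+x)*(c+x) \<le> (x+1)^2*(d+x)*(e+x)"
proof -
  have id: "(x+1)^2*(d+x)*(e+x) - (x+2)*(a+x)*(b+x)*(c+x) =
     (d+e-(a+b+c))*x^3 + (d*e + 2*(d+e) + 1 - (a*b+b*c+a*c) - 2*(a+b+c))*x^2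
     + (2*(d*e) + (d+e) - a*b*c - 2*(a*b+b*c+a*c))*x + (d*e - 2*a*b*c)"
    by (simp add: algebra_simps power2_eq_square power3_eq_cube)
  have abc: "2*a*b*c = 2*(a*b*c)" "3*a*b*c = 3*(a*b*c)" by simp_all
  have k3: "d+e-(a+b+c) \<ge> 0" using assms by linarith
  have h2: "a*b + b*c + a*c + 2*(a + b + c) - 1 - 2*a*b*c \<le> 2*(d+e)" using assms(7) by simp
  have k2: "d*e + 2*(d+e) + 1 - (a*b+b*c+a*c) - 2*(a+b+c) \<ge> 0" using assms(5) h2 by linarith
  have k1: "2*(d*e) + (d+e) - a*b*c - 2*(a*b+b*c+a*c) \<ge> 0" using assms abc by linarith
  have k0: "d*e - 2*a*b*c \<ge> 0" using assms by linarith
  have "0 \<le> (d+e-(a+b+c))*x^3 + (d*e + 2*(d+e) + 1 - (a*b+b*c+a*c) - 2*(a+b+c))*x^2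
     + (2*(d*e) + (d+e) - a*b*c - 2*(a*b+b*c+a*c))*x + (d*e - 2*a*b*c)"
    using k3 k2 k1 k0 assms(1) by (intro add_nonneg_nonneg mult_nonneg_nonneg) auto
  then show ?thesis using id by linarith
qed

lemma coeff_facts:
  fixes a b c d e :: real
  assumes "a > 0" "b > 0" "c > 0" "d > 0" "e > 0"
    and "d * e \<ge> 2 * a * b * c"
    and "d + e \<ge> a + b + c"
    and "d + e \<ge> (a*b + b*c + a*c + 2*(a + b + c) - 1 - 2*a*b*c) / 2"
    and "d + e \<ge> 2*(a*b + b*c + a*c) - 3*a*b*c"
  defines "A \<equiv> \<lambda>n. pochhammer a n * pochhammer b n * pochhammer c n /
                  (pochhammer d n * pochhammer e n * pochhammer 1 n)"
  shows "A n > 0" "(real n + 2) * A (Suc n) \<le> (real n + 1) * A n"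
proof -
  show pos: "A n > 0" unfolding A_def using assms
    by (intro divide_pos_pos mult_pos_pos pochhammer_pos) auto
  define x where "x = real n"
  have x0: "x \<ge> 0" unfolding x_def by simp
  have rec: "A (Suc n) = A n * ((a+x)*(b+x)*(c+x) / ((d+x)*(e+x)*(x+1)))"
    unfolding A_def x_def by (simp add: pochhammer_Suc field_simps)
  have den: "(d+x)*(e+x)*(x+1) > 0" using assms x0 by simp
  have "(x+2)*(a+x)*(b+x)*(c+x) \<le> (x+1)^2*(d+x)*(e+x)"
    using poly_ineq[OF x0 assms(1-3) assms(6-9)] .
  then have "(x+2) * ((a+x)*(b+x)*(c+x) / ((d+x)*(e+x)*(x+1))) \<le> x + 1"
    using den x0 by (simp add: field_simps power2_eq_square)
  then have "A n * ((x+2) * ((a+x)*(b+x)*(c+x) / ((d+x)*(e+x)*(x+1)))) \<le> A n * (x + 1)"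
    using pos by (intro mult_left_mono) auto
  then show "(real n + 2) * A (Suc n) \<le> (real n + 1) * A n"
    unfolding rec x_def[symmetric] by (simp add: algebra_simps)
qed

lemma exp_lt_ln: "exp x < 2 * y \<Longrightarrow> (y::real) > 0 \<Longrightarrow> x < ln 2 + ln y"
proof -
  assume h: "exp x < 2 * y" "y > 0"
  have "x = ln (exp x)" by simp
  also have "\<dots> < ln (2 * y)" using h by (subst ln_less_cancel_iff) auto
  also have "\<dots> = ln 2 + ln y" using h by (simp add: ln_mult)
  finally show ?thesis .
qed

lemma ln_lt_exp: "x < ln 2 + ln y \<Longrightarrow> (y::real) > 0 \<Longrightarrow> exp x < 2 * y"
proof -
  assume h: "x < ln 2 + ln y" "y > 0"
  have "exp x < exp (ln 2 + ln y)" using h by simp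
  also have "\<dots> = 2 * y" using h by (simp add: exp_add)
  finally show ?thesis .
qed

lemma conv_strict:
  fixes x1 x2 y1 y2 t :: real
  assumes "x1 < y1" "x2 < y2" "0 \<le> t" "t \<le> 1"
  shows "(1-t)*x2 + t*x1 < (1-t)*y2 + t*y1"
proof (cases "t = 1")
  case True then show ?thesis using assms by simp
next
  case False
  then have "(1-t)*x2 < (1-t)*y2" using assms by (intro mult_strict_left_mono) auto
  moreover have "t*x1 \<le> t*y1" using assms by (intro mult_left_mono) auto
  ultimately show ?thesis by linarith
qed

lemma conv_region:
  fixes z1 z2 :: complex and t :: real
  assumes "cmod z1 < 1" "cmod z2 < 1" "0 \<le> t" "t \<le> 1"
  shows "cmod (1 - exp (- (- Ln (1 - z2) + of_real t * (- Ln (1 - z1) - - Ln (1 - z2))))) < 1"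
proof -
  define L1 where "L1 = Ln (1 - z1)"
  define L2 where "L2 = Ln (1 - z2)"
  have r1: "Re (1 - z1) > 0" using assms(1) abs_Re_le_cmod[of z1] by simp
  have r2: "Re (1 - z2) > 0" using assms(2) abs_Re_le_cmod[of z2] by simp
  have nz1: "1 - z1 \<noteq> 0" using r1 by auto
  have nz2: "1 - z2 \<noteq> 0" using r2 by auto
  have i1: "\<bar>Im L1\<bar> < pi/2" unfolding L1_def using Re_Ln_pos_lt[OF nz1] r1 by simp
  have i2: "\<bar>Im L2\<bar> < pi/2" unfolding L2_def using Re_Ln_pos_lt[OF nz2] r2 by simp
  have e1: "exp (Re L1) < 2 * cos (Im L1)"
    using exp_ball[of L1] assms(1) nz1 unfolding L1_def by (simp add: exp_Ln norm_minus_commute)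
  have e2: "exp (Re L2) < 2 * cos (Im L2)"
    using exp_ball[of L2] assms(2) nz2 unfolding L2_def by (simp add: exp_Ln norm_minus_commute)
  have c1: "cos (Im L1) > 0" using e1 exp_gt_zero[of "Re L1"] by linarith
  have c2: "cos (Im L2) > 0" using e2 exp_gt_zero[of "Re L2"] by linarith
  have l1: "Re L1 < ln 2 + ln (cos (Im L1))"
    using exp_lt_ln[OF e1 c1] .
  have l2: "Re L2 < ln 2 + ln (cos (Im L2))"
    using exp_lt_ln[OF e2 c2] .
  define M where "M = (1 - t) * L2 + t * L1"
  have M: "- (- Ln (1 - z2) + of_real t * (- Ln (1 - z1) - - Ln (1 - z2))) = M"
    unfolding M_def L1_def L2_def by (simp add: algebra_simps)
  have reM: "Re M = (1-t) * Re L2 + t * Re L1" unfolding M_def by simp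
  have imM: "Im M = (1-t) * Im L2 + t * Im L1" unfolding M_def by simp
  have cv: "- ln (cos ((1 - t) *\<^sub>R Im L2 + t *\<^sub>R Im L1)) \<le> (1-t) * (- ln (cos (Im L2))) + t * (- ln (cos (Im L1)))"
  proof -
    have "Im L2 \<in> {-pi/2<..<pi/2}" "Im L1 \<in> {-pi/2<..<pi/2}" using i1 i2 by (auto simp: abs_less_iff)
    then show ?thesis using convex_onD[OF lncos_convex, of t "Im L2" "Im L1"] assms(3,4) by simp
  qed
  have imin: "Im M \<in> {-pi/2<..<pi/2}"
  proof -
    have "(1-t) * Im L2 + t * Im L1 < (1-t) * (pi/2) + t * (pi/2)"
      using i1 i2 assms(3,4) by (intro conv_strict) (auto simp: abs_less_iff)
    moreover have "(1-t) * Im L2 + t * Im L1 > (1-t) * (-pi/2) + t * (-pi/2)"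
      using i1 i2 assms(3,4) by (intro conv_strict) (auto simp: abs_less_iff)
    moreover have "(1-t) * (pi/2) + t * (pi/2) = pi/2" "(1-t) * (-pi/2) + t * (-pi/2) = -pi/2"
      by (simp_all add: field_simps)
    ultimately show ?thesis unfolding imM by simp
  qed
  have cM: "cos (Im M) > 0" using imin by (auto intro: cos_gt_zero_pi)
  have "(1-t) * Re L2 + t * Re L1 < (1-t) * (ln 2 + ln (cos (Im L2))) + t * (ln 2 + ln (cos (Im L1)))"
    using l1 l2 assms(3,4) by (intro conv_strict)
  also have "\<dots> \<le> ln 2 + ln (cos (Im M))"
    using cv unfolding imM by (simp add: algebra_simps)
  finally have "Re M < ln 2 + ln (cos (Im M))" unfolding reM .
  then have "exp (Re M) < 2 * cos (Im M)"
    by (rule ln_lt_exp[OF _ cM])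
  then have "cmod (exp M - 1) < 1" using exp_ball by blast
  then show ?thesis unfolding M by (simp add: norm_minus_commute)
qed

lemma re_deriv:
  assumes "(H has_field_derivative D) (at (of_real t))"
  shows "((\<lambda>t. Re (H (of_real t))) has_real_derivative Re D) (at t)"
proof -
  have "((\<lambda>x. H (of_real x)) has_vector_derivative D) (at t)"
    using has_vector_derivative_real_field[OF assms] .
  then have "((\<lambda>x. H (of_real x)) has_derivative (\<lambda>x. x *\<^sub>R D)) (at t)"
    by (simp add: has_vector_derivative_def)
  then have "((\<lambda>x. Re (H (of_real x))) has_derivative (\<lambda>x. Re (x *\<^sub>R D))) (at t)"
    by (rule bounded_linear.has_derivative[OF bounded_linear_Re])
  moreover have "(\<lambda>x. Re (x *\<^sub>R D)) = (*) (Re D)" by (auto simp: mult.commute)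
  ultimately show ?thesis by (simp add: has_field_derivative_def)
qed



lemma re_pos:
  fixes B :: "nat \<Rightarrow> real" and z :: complex
  assumes B0: "B 0 = 1" and Bdec: "\<And>n. B (Suc n) \<le> B n" and Bnn: "\<And>n. 0 \<le> B n"
    and z: "cmod z < 1"
  shows "Re ((\<Sum>n. of_real (B n) * z^n) * (1 - z)) > 0"
proof -
  define r where "r = cmod z"
  have r0: "0 \<le> r" and r1: "r < 1" using z unfolding r_def by auto
  have Ble: "B n \<le> 1" for n
    by (induction n) (use B0 Bdec in \<open>auto intro: order_trans\<close>)
  have sumB: "summable (\<lambda>n. of_real (B n) * z^n)"
  proof (rule summable_comparison_test'[of "\<lambda>n. r^n" 0])
    show "summable (\<lambda>n. r^n)" using r0 r1 by (intro summable_geometric) auto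
    fix n :: nat
    have "norm (of_real (B n) * z^n) = B n * r^n"
      using Bnn[of n] by (simp add: norm_mult norm_power r_def)
    also have "\<dots> \<le> 1 * r^n" using Ble[of n] r0 by (intro mult_right_mono) auto
    finally show "norm (of_real (B n) * z^n) \<le> r^n" by simp
  qed
  define S where "S = (\<Sum>n. of_real (B n) * z^n)"
  define D where "D n = of_real (B (Suc n) - B n) * z^Suc n" for n
  have sum2: "summable (\<lambda>n. of_real (B n) * z^n * z)"
    using summable_mult2[OF sumB] .
  have sum3: "summable (\<lambda>n. of_real (B (Suc n)) * z^Suc n)"
    using sumB by (subst summable_Suc_iff)
  have h1: "(\<Sum>n. of_real (B (Suc n)) * z^Suc n) = S - 1"
    unfolding S_def using suminf_split_head[OF sumB] B0 by simp
  have h2: "S * z = (\<Sum>n. of_real (B n) * z^n * z)"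
    unfolding S_def using suminf_mult2[OF sumB] .
  have "S * (1 - z) = S - S * z" by (simp add: algebra_simps)
  also have "\<dots> = 1 + ((\<Sum>n. of_real (B (Suc n)) * z^Suc n) - (\<Sum>n. of_real (B n) * z^n * z))"
    using h1 h2 by simp
  also have "\<dots> = 1 + (\<Sum>n. of_real (B (Suc n)) * z^Suc n - of_real (B n) * z^n * z)"
    using suminf_diff[OF sum3 sum2] by simp
  also have "(\<lambda>n. of_real (B (Suc n)) * z^Suc n - of_real (B n) * z^n * z) = D"
    unfolding D_def by (auto simp: algebra_simps)
  finally have SD: "S * (1 - z) = 1 + suminf D" .
  have nD: "norm (D n) = (B n - B (Suc n)) * r^Suc n" for n
  proof -
    have "norm (D n) = \<bar>B (Suc n) - B n\<bar> * r^Suc n"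
      unfolding D_def r_def by (simp add: norm_mult norm_power del: of_real_diff)
    then show ?thesis using Bdec[of n] by simp
  qed
  have sumnD: "summable (\<lambda>n. norm (D n))"
  proof (rule summable_comparison_test'[of "\<lambda>n. r^n" 0])
    show "summable (\<lambda>n. r^n)" using r0 r1 by (intro summable_geometric) auto
    fix n :: nat
    have "r^Suc n \<le> r^n" using r0 r1 by (intro power_decreasing) auto
    moreover have "B n - B (Suc n) \<le> 1" "0 \<le> B n - B (Suc n)" using Ble[of n] Bnn[of "Suc n"] Bdec[of n] by auto
    ultimately have "(B n - B (Suc n)) * r^Suc n \<le> 1 * r^n"
      using r0 by (intro mult_mono) auto
    then have "norm (D n) \<le> r^n" using nD by simp
    then show "norm (norm (D n)) \<le> r^n" by simp
  qed
  have "(\<Sum>n. norm (D n)) \<le> r"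
  proof (rule suminf_le_const[OF sumnD])
    fix N
    have "(\<Sum>n<N. norm (D n)) \<le> (\<Sum>n<N. (B n - B (Suc n)) * r)"
    proof (rule sum_mono)
      fix n assume "n \<in> {..<N}"
      have "r^Suc n \<le> r" using r0 r1 by (simp add: mult_left_le power_le_one)
      then show "norm (D n) \<le> (B n - B (Suc n)) * r"
        unfolding nD using Bdec[of n] by (intro mult_left_mono) auto
    qed
    also have "\<dots> = (\<Sum>n<N. B n - B (Suc n)) * r" by (simp add: sum_distrib_right)
    also have "\<dots> = (B 0 - B N) * r" by (simp add: sum_lessThan_telescope')
    also have "\<dots> \<le> r"
    proof -
      have "B N * r \<ge> 0" using Bnn[of N] r0 by simp
      then show ?thesis using B0 by (simp add: algebra_simps)
    qed
    finally show "(\<Sum>n<N. norm (D n)) \<le> r" .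
  qed
  then have "norm (suminf D) \<le> r" using summable_norm[OF sumnD] by linarith
  then have "Re (suminf D) \<ge> - r" using abs_Re_le_cmod[of "suminf D"] by linarith
  then have "Re (S * (1 - z)) > 0" unfolding SD using r1 by simp
  then show ?thesis unfolding S_def .
qed

lemma re_ofreal_mult: "Re (complex_of_real r * y) = r * Re y"
  by simp

lemma inj_lemma:
  fixes f Q :: "complex \<Rightarrow> complex"
  assumes der: "\<And>z. cmod z < 1 \<Longrightarrow> (f has_field_derivative Q z) (at z)"
    and re: "\<And>z. cmod z < 1 \<Longrightarrow> Re (Q z * (1 - z)) > 0"
  shows "inj_on f (ball 0 1)"
proof (rule inj_onI)
  fix z1 z2 assume z1: "z1 \<in> ball 0 (1::real)" and z2: "z2 \<in> ball 0 (1::real)" and eq: "f z1 = f z2"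
  have n1: "cmod z1 < 1" and n2: "cmod z2 < 1" using z1 z2 by auto
  have nz1: "1 - z1 \<noteq> 0" using n1 by auto
  have nz2: "1 - z2 \<noteq> 0" using n2 by auto
  define W1 where "W1 = - Ln (1 - z1)"
  define W2 where "W2 = - Ln (1 - z2)"
  define \<Delta> where "\<Delta> = W1 - W2"
  have ex1: "exp (- W1) = 1 - z1" unfolding W1_def using nz1 by simp
  have ex2: "exp (- W2) = 1 - z2" unfolding W2_def using nz2 by simp
  show "z1 = z2"
  proof (rule ccontr)
    assume ne: "z1 \<noteq> z2"
    have dnz: "\<Delta> \<noteq> 0"
    proof
      assume "\<Delta> = 0"
      then have "W1 = W2" unfolding \<Delta>_def by simp
      then have "1 - z1 = 1 - z2" using ex1 ex2 by simp
      then show False using ne by simp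
    qed
    define H where "H s = cnj \<Delta> * f (1 - exp (- (W2 + s * \<Delta>)))" for s
    have "Re (H (of_real 0)) < Re (H (of_real 1))"
    proof (rule DERIV_pos_imp_increasing[where f = "\<lambda>t. Re (H (of_real t))"])
      fix t :: real assume t0: "0 \<le> t" and t1: "t \<le> 1"
      define w where "w = W2 + of_real t * \<Delta>"
      define \<zeta> where "\<zeta> = 1 - exp (- w)"
      have z\<zeta>: "cmod \<zeta> < 1"
        using conv_region[OF n1 n2 t0 t1] unfolding \<zeta>_def w_def \<Delta>_def W1_def W2_def .
      have inner: "((\<lambda>s. 1 - exp (- (W2 + s * \<Delta>))) has_field_derivative (exp (- w) * \<Delta>)) (at (of_real t))"
        unfolding w_def by (auto intro!: derivative_eq_intros)
      have d\<zeta>: "(f has_field_derivative Q \<zeta>) (at (1 - exp (- (W2 + of_real t * \<Delta>))))"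
        using der[OF z\<zeta>] unfolding \<zeta>_def w_def .
      have "((\<lambda>s. f (1 - exp (- (W2 + s * \<Delta>)))) has_field_derivative Q \<zeta> * (exp (- w) * \<Delta>)) (at (of_real t))"
        using DERIV_chain2[OF d\<zeta> inner] .
      then have "(H has_field_derivative cnj \<Delta> * (Q \<zeta> * (exp (- w) * \<Delta>))) (at (of_real t))"
        unfolding H_def[abs_def] by (rule DERIV_cmult)
      from re_deriv[OF this]
      have d: "((\<lambda>t. Re (H (of_real t))) has_real_derivative Re (cnj \<Delta> * (Q \<zeta> * (exp (- w) * \<Delta>)))) (at t)" .
      have "cnj \<Delta> * (Q \<zeta> * (exp (- w) * \<Delta>)) = (\<Delta> * cnj \<Delta>) * (Q \<zeta> * (1 - \<zeta>))"
        unfolding \<zeta>_def by (simp add: algebra_simps)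
      also have "\<dots> = of_real ((cmod \<Delta>)^2) * (Q \<zeta> * (1 - \<zeta>))"
        by (simp only: complex_norm_square)
      finally have eqX: "cnj \<Delta> * (Q \<zeta> * (exp (- w) * \<Delta>)) = of_real ((cmod \<Delta>)^2) * (Q \<zeta> * (1 - \<zeta>))" .
      have "Re (cnj \<Delta> * (Q \<zeta> * (exp (- w) * \<Delta>))) = (cmod \<Delta>)^2 * Re (Q \<zeta> * (1 - \<zeta>))"
        unfolding eqX by (rule re_ofreal_mult)
      moreover have "(cmod \<Delta>)^2 * Re (Q \<zeta> * (1 - \<zeta>)) > 0"
        using dnz re[OF z\<zeta>] by simp
      ultimately show "\<exists>y. ((\<lambda>t. Re (H (of_real t))) has_real_derivative y) (at t) \<and> 0 < y"
        using d by auto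
    qed simp
    moreover have "H (of_real 0) = cnj \<Delta> * f z2" unfolding H_def using ex2 by simp
    moreover have "H (of_real 1) = cnj \<Delta> * f z1" unfolding H_def \<Delta>_def using ex1 by simp
    ultimately show False using eq by simp
  qed
qed



theorem theorem2p1:
  fixes a b c d e :: real
  assumes "a > 0" "b > 0" "c > 0"
    and "d \<notin> {x. \<exists>k::nat. x = - real k}"
    and "e \<notin> {x. \<exists>k::nat. x = - real k}"
    and "d * e \<ge> 2 * a * b * c"
    and "d + e \<ge> a + b + c"
    and "d + e \<ge> (a*b + b*c + a*c + 2*(a + b + c) - 1 - 2*a*b*c) / 2"
    and "d + e \<ge> 2*(a*b + b*c + a*c) - 3*a*b*c"
  shows "close_to_convex_wrt
           (\<lambda>z. z * hyp3F2 (complex_of_real a) (complex_of_real b) (complex_of_real c)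
                              (complex_of_real d) (complex_of_real e) z)
           (\<lambda>z. - Ln (1 - z))"
proof -
  have abc: "2 * a * b * c > 0" using assms(1-3) by simp
  then have de: "d * e > 0" using assms(6) by linarith
  have spos: "d + e > 0" using assms(1-3,7) by linarith
  have dpos: "d > 0" and epos: "e > 0"
    using de spos by (auto simp: zero_less_mult_iff)
  define A where "A = (\<lambda>n. pochhammer a n * pochhammer b n * pochhammer c n /
                  (pochhammer d n * pochhammer e n * pochhammer 1 n))"
  have Apos: "A n > 0" and Adec: "(real n + 2) * A (Suc n) \<le> (real n + 1) * A n" for n
    using coeff_facts[OF assms(1-3) dpos epos assms(6-9), of n] unfolding A_def by auto
  define B where "B n = (real n + 1) * A n" for n
  have B0: "B 0 = 1" unfolding B_def A_def by simp
  have Bdec: "B (Suc n) \<le> B n" for n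
    using Adec[of n] unfolding B_def by (simp add: add.commute)
  have Bnn: "0 \<le> B n" for n unfolding B_def using Apos[of n] by simp
  have Ble: "B n \<le> 1" for n
    by (induction n) (use B0 Bdec in \<open>auto intro: order_trans\<close>)
  have Ale: "A n \<le> 1" for n
  proof -
    have "A n \<le> B n" unfolding B_def using Apos[of n] by (simp add: algebra_simps)
    then show ?thesis using Ble[of n] by linarith
  qed
  define cf where "cf n = complex_of_real (A n)" for n
  define F where "F = (\<lambda>z. \<Sum>n. cf n * z^n)"
  define Q where "Q = (\<lambda>z. \<Sum>n. complex_of_real (B n) * z^n)"
  have hyp: "hyp3F2 (complex_of_real a) (complex_of_real b) (complex_of_real c)
                    (complex_of_real d) (complex_of_real e) z = F z" for z
    unfolding hyp3F2_def F_def cf_def A_def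
    by (simp add: pochhammer_of_real pochhammer_fact[symmetric])
  have feq: "(\<lambda>z. z * hyp3F2 (complex_of_real a) (complex_of_real b) (complex_of_real c)
                    (complex_of_real d) (complex_of_real e) z) = (\<lambda>z. z * F z)"
    using hyp by simp
  have sumA: "summable (\<lambda>n. cf n * z^n)" if z: "cmod z < 1" for z
  proof (rule summable_comparison_test'[of "\<lambda>n. cmod z ^ n" 0])
    show "summable (\<lambda>n. cmod z ^ n)" using z by (intro summable_geometric) auto
    fix n :: nat
    have "norm (cf n * z^n) = A n * cmod z ^ n"
      using Apos[of n] by (simp add: cf_def norm_mult norm_power)
    also have "\<dots> \<le> 1 * cmod z ^ n" using Ale[of n] by (intro mult_right_mono) auto
    finally show "norm (cf n * z^n) \<le> cmod z ^ n" by simp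
  qed
  have sumB: "summable (\<lambda>n. complex_of_real (B n) * z^n)" if z: "cmod z < 1" for z
  proof (rule summable_comparison_test'[of "\<lambda>n. cmod z ^ n" 0])
    show "summable (\<lambda>n. cmod z ^ n)" using z by (intro summable_geometric) auto
    fix n :: nat
    have "norm (complex_of_real (B n) * z^n) = B n * cmod z ^ n"
      using Bnn[of n] by (simp add: norm_mult norm_power)
    also have "\<dots> \<le> 1 * cmod z ^ n" using Ble[of n] by (intro mult_right_mono) auto
    finally show "norm (complex_of_real (B n) * z^n) \<le> cmod z ^ n" by simp
  qed
  have derf: "((\<lambda>z. z * F z) has_field_derivative Q z) (at z)" if z: "cmod z < 1" for z
  proof -
    define F' where "F' = (\<Sum>n. diffs cf n * z^n)"
    have dF: "(F has_field_derivative F') (at z)"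
      unfolding F_def F'_def using termdiffs_strong'[of 1 cf z] sumA z by auto
    have sumD: "summable (\<lambda>n. diffs cf n * z^n)"
      using termdiff_converges[of z 1 cf] sumA z by auto
    define g where "g n = of_nat n * cf n * z^n" for n
    have gdiff: "g n = complex_of_real (B n) * z^n - cf n * z^n" for n
      unfolding g_def B_def cf_def by (simp add: algebra_simps)
    have sumg: "summable g"
      unfolding gdiff using sumB[OF z] sumA[OF z] by (rule summable_diff)
    have "z * F' = (\<Sum>n. z * (diffs cf n * z^n))"
      unfolding F'_def using suminf_mult[OF sumD] by simp
    also have "(\<lambda>n. z * (diffs cf n * z^n)) = (\<lambda>n. g (Suc n))"
      unfolding g_def diffs_def by (auto simp: algebra_simps)
    also have "(\<Sum>n. g (Suc n)) = suminf g - g 0" by (rule suminf_split_head[OF sumg])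
    finally have zF': "z * F' = suminf g" unfolding g_def by simp
    have "F z + z * F' = (\<Sum>n. cf n * z^n) + suminf g" unfolding F_def zF' by simp
    also have "\<dots> = (\<Sum>n. cf n * z^n + g n)" by (rule suminf_add[OF sumA[OF z] sumg])
    also have "(\<lambda>n. cf n * z^n + g n) = (\<lambda>n. complex_of_real (B n) * z^n)"
      unfolding gdiff by simp
    finally have eqQ: "F z + z * F' = Q z" unfolding Q_def .
    have "((\<lambda>z. z * F z) has_field_derivative z * F' + 1 * F z) (at z)"
      by (rule DERIV_mult'[OF DERIV_ident dF])
    then show ?thesis using eqQ by (simp add: add.commute)
  qed
  have derg: "((\<lambda>z. - Ln (1 - z)) has_field_derivative inverse (1 - z)) (at z)" if z: "cmod z < 1" for z
  proof -
    have "Re (1 - z) > 0" using z abs_Re_le_cmod[of z] by simp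
    then have "1 - z \<notin> \<real>\<^sub>\<le>\<^sub>0" by (auto simp: complex_nonpos_Reals_iff)
    then show ?thesis by (auto intro!: derivative_eq_intros)
  qed
  have reQ: "Re (Q z * (1 - z)) > 0" if z: "cmod z < 1" for z
    unfolding Q_def using re_pos[OF B0 Bdec Bnn z] .
  show ?thesis
    unfolding close_to_convex_wrt_def feq
  proof (intro conjI ballI)
    show "(\<lambda>z. z * F z) holomorphic_on ball 0 1"
      by (auto simp: holomorphic_on_open intro!: exI derf)
    show "0 * F 0 = 0" by simp
    have "deriv (\<lambda>z. z * F z) 0 = Q 0" using derf[of 0] by (simp add: DERIV_imp_deriv)
    also have "Q 0 = 1" unfolding Q_def using B0 by simp
    finally show "deriv (\<lambda>z. z * F z) 0 = 1" .
    show "inj_on (\<lambda>z. z * F z) (ball 0 1)"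
      using inj_lemma[of "\<lambda>z. z * F z" Q] derf reQ by blast
  next
    fix z :: complex assume "z \<in> ball 0 1"
    then have z: "cmod z < 1" by simp
    have nz: "1 - z \<noteq> 0" using z by auto
    have "deriv (\<lambda>z. z * F z) z / deriv (\<lambda>z. - Ln (1 - z)) z = Q z / inverse (1 - z)"
      using DERIV_imp_deriv[OF derf[OF z]] DERIV_imp_deriv[OF derg[OF z]] by simp
    also have "\<dots> = Q z * (1 - z)" using nz by (simp add: divide_inverse)
    finally show "0 < Re (deriv (\<lambda>z. z * F z) z / deriv (\<lambda>z. - Ln (1 - z)) z)"
      using reQ[OF z] by simp
  qed
qed

end
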